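(* Let $H$ be a finite abelian group and $k$ a positive integer. Suppose that for infinitely many primes $p$, every non-zero sum subset of size $k$ of $(\mathbb{Z}_p \times H) \setminus \{0_{\mathbb{Z}_p\times H}\}$ is sequenceable. Then for every positive integer $m$ all of whose prime factors are greater than $k!/2$, every non-zero sum subset of size $k$ of $(\mathbb{Z}_m \times H) \setminus \{0_{\mathbb{Z}_m\times H}\}$ is sequenceable.
   Context: For a finite subset $S$ of an abelian group with $|S| = k$, an ordering $(x_1,\dots,x_k)$ of $S$ has partial sums $(y_0,\dots,y_k)$ with $y_0 = 0$, $y_i = x_1+\cdots+x_i$. It is a sequencing if the $y_i$ are pairwise distinct, and a rotational sequencing if they are pairwise distinct except that $y_k = y_0 = 0$; $S$ is sequenceable if it has one or the other. $S$ is non-zero sum if the sum of its elements is nonzero. *)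

theory Defs
  imports Main "HOL-Computational_Algebra.Primes"
begin

text \<open>The group Z_m x H, where H is a finite abelian group given as a type of class
  ab_group_add (the whole type is the group).\<close>

definition ZH_carrier :: "nat \<Rightarrow> (nat \<times> 'h::ab_group_add) set" where
  "ZH_carrier m = {x. fst x < m}"

definition ZH_zero :: "nat \<times> 'h::ab_group_add" where
  "ZH_zero = (0, 0)"

definition ZH_add :: "nat \<Rightarrow> nat \<times> 'h::ab_group_add \<Rightarrow> nat \<times> 'h \<Rightarrow> nat \<times> 'h" where
  "ZH_add m x y = ((fst x + fst y) mod m, snd x + snd y)"

definition ZH_psum :: "nat \<Rightarrow> (nat \<times> 'h::ab_group_add) list \<Rightarrow> nat \<Rightarrow> nat \<times> 'h" where
  "ZH_psum m xs i = foldl (ZH_add m) ZH_zero (take i xs)"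

definition ZH_setsum :: "nat \<Rightarrow> (nat \<times> 'h::ab_group_add) set \<Rightarrow> nat \<times> 'h" where
  "ZH_setsum m S = ((\<Sum>x\<in>S. fst x) mod m, (\<Sum>x\<in>S. snd x))"

definition ordering_of :: "'a list \<Rightarrow> 'a set \<Rightarrow> bool" where
  "ordering_of xs S \<longleftrightarrow> distinct xs \<and> set xs = S"

definition ZH_sequencing :: "nat \<Rightarrow> (nat \<times> 'h::ab_group_add) list \<Rightarrow> bool" where
  "ZH_sequencing m xs \<longleftrightarrow> inj_on (ZH_psum m xs) {0..length xs}"

definition ZH_rot_sequencing :: "nat \<Rightarrow> (nat \<times> 'h::ab_group_add) list \<Rightarrow> bool" where
  "ZH_rot_sequencing m xs \<longleftrightarrow>
     inj_on (ZH_psum m xs) {0..<length xs} \<and> ZH_psum m xs (length xs) = ZH_zero"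

definition ZH_sequenceable :: "nat \<Rightarrow> (nat \<times> 'h::ab_group_add) set \<Rightarrow> bool" where
  "ZH_sequenceable m S \<longleftrightarrow>
     (\<exists>xs. ordering_of xs S \<and> (ZH_sequencing m xs \<or> ZH_rot_sequencing m xs))"

definition ZH_nonzero_sum :: "nat \<Rightarrow> (nat \<times> 'h::ab_group_add) set \<Rightarrow> bool" where
  "ZH_nonzero_sum m S \<longleftrightarrow> ZH_setsum m S \<noteq> ZH_zero"

definition all_seq :: "nat \<Rightarrow> nat \<Rightarrow> 'h::ab_group_add itself \<Rightarrow> bool" where
  "all_seq m k _ \<longleftrightarrow> (\<forall>S::(nat \<times> 'h) set. S \<subseteq> ZH_carrier m - {ZH_zero} \<and> card S = k
       \<and> ZH_nonzero_sum m S \<longrightarrow> ZH_sequenceable m S)"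

end

theory Submission
  imports Defs Jordan_Normal_Form.Determinant
begin

lemma det_bound01:
  fixes M :: "int mat"
  assumes "M \<in> carrier_mat r r" "\<And>i j. i < r \<Longrightarrow> j < r \<Longrightarrow> M $$ (i,j) = 0 \<or> M $$ (i,j) = 1"
  shows "(r \<le> 2 \<longrightarrow> \<bar>det M\<bar> \<le> 1) \<and> (2 \<le> r \<longrightarrow> 2 * \<bar>det M\<bar> \<le> fact r)"
  using assms
proof (induction r arbitrary: M rule: less_induct)
  case (less r)
  show ?case
  proof (cases "r \<le> 2")
    case True
    then consider "r = 0" | "r = 1" | "r = 2" by linarith
    then have "\<bar>det M\<bar> \<le> 1"
    proof cases
      case 1 then show ?thesis using less.prems det_dim_zero by simp
    next
      case 2 then show ?thesis using less.prems det_single[of M] by fastforce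
    next
      case 3
      have "det M = (\<Sum>j<2. M $$ (0,j) * cofactor M 0 j)"
        using laplace_expansion_row[of M 2 0] less.prems 3 by simp
      also have "\<dots> = M $$ (0,0) * M $$ (1,1) - M $$ (0,1) * M $$ (1,0)"
        using less.prems 3
        by (simp add: numeral_2_eq_2 cofactor_def det_single mat_delete_carrier mat_delete_def)
      finally have "det M = M $$ (0,0) * M $$ (1,1) - M $$ (0,1) * M $$ (1,0)" .
      moreover have "M $$ (0,0) = 0 \<or> M $$ (0,0) = 1" "M $$ (1,1) = 0 \<or> M $$ (1,1) = 1"
         "M $$ (0,1) = 0 \<or> M $$ (0,1) = 1" "M $$ (1,0) = 0 \<or> M $$ (1,0) = 1"
        using less.prems 3 by auto
      ultimately show ?thesis by auto
    qed
    then show ?thesis using True by (auto simp: numeral_2_eq_2)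
  next
    case False
    then obtain r' where r': "r = Suc r'" "2 \<le> r'" by (metis Suc_pred' le_less_Suc_eq not_le not_less_eq_eq zero_less_Suc)
    have "det M = (\<Sum>j<r. M $$ (0,j) * cofactor M 0 j)"
      using laplace_expansion_row[of M r 0] less.prems r' by simp
    hence "\<bar>det M\<bar> \<le> (\<Sum>j<r. \<bar>M $$ (0,j) * cofactor M 0 j\<bar>)" by (simp add: sum_abs)
    also have "\<dots> \<le> (\<Sum>j<r. \<bar>det (mat_delete M 0 j)\<bar>)"
    proof (rule sum_mono)
      fix j assume j: "j \<in> {..<r}"
      have "M $$ (0,j) = 0 \<or> M $$ (0,j) = 1" using less.prems j r' by auto
      then show "\<bar>M $$ (0,j) * cofactor M 0 j\<bar> \<le> \<bar>det (mat_delete M 0 j)\<bar>"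
        by (auto simp: cofactor_def abs_mult)
    qed
    finally have A: "2 * \<bar>det M\<bar> \<le> (\<Sum>j<r. 2 * \<bar>det (mat_delete M 0 j)\<bar>)" by (simp add: sum_distrib_left[symmetric])
    have B: "2 * \<bar>det (mat_delete M 0 j)\<bar> \<le> fact r'" if j: "j < r" for j
    proof -
      have c: "mat_delete M 0 j \<in> carrier_mat r' r'" using mat_delete_carrier[OF less.prems(1)] r' by simp
      have "\<And>i l. i < r' \<Longrightarrow> l < r' \<Longrightarrow> mat_delete M 0 j $$ (i,l) = 0 \<or> mat_delete M 0 j $$ (i,l) = 1"
        using less.prems r' j by (auto simp: mat_delete_def)
      then show ?thesis using less.IH[of r' "mat_delete M 0 j"] c r' by auto
    qed
    have "(\<Sum>j<r. 2 * \<bar>det (mat_delete M 0 j)\<bar>) \<le> (\<Sum>j<r. (fact r' :: int))"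
      using B by (intro sum_mono) auto
    also have "\<dots> = fact r" using r' by (simp add: fact_Suc)
    finally show ?thesis using A False by auto
  qed
qed



definition subm :: "nat set list \<Rightarrow> nat list \<Rightarrow> int mat" where
  "subm I J = mat (length I) (length J) (\<lambda>(x,y). if J!y \<in> I!x then 1 else 0)"

lemma subm_carrier: "subm I J \<in> carrier_mat (length I) (length J)"
  by (simp add: subm_def)

lemma subm_index: "x < length I \<Longrightarrow> y < length J \<Longrightarrow> subm I J $$ (x,y) = (if J!y \<in> I!x then 1 else 0)"
  by (simp add: subm_def)

lemma subm_border:
  assumes "length I = r" "length J = r"
  shows "det (subm (I@[T]) (J@[j])) = (if j \<in> T then det (subm I J) else 0)
          + (\<Sum>y<r. (if J!y \<in> T then 1 else 0) * cofactor (subm (I@[{}]) (J@[j])) r y)"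
proof -
  let ?M = "subm (I@[T]) (J@[j])"
  have M: "?M \<in> carrier_mat (Suc r) (Suc r)" using assms subm_carrier[of "I@[T]" "J@[j]"] by simp
  have "det ?M = (\<Sum>y<Suc r. ?M $$ (r,y) * cofactor ?M r y)"
    using laplace_expansion_row[OF M, of r] by simp
  also have "\<dots> = (\<Sum>y<r. ?M $$ (r,y) * cofactor ?M r y) + ?M $$ (r,r) * cofactor ?M r r"
    by simp
  also have "?M $$ (r,r) * cofactor ?M r r = (if j \<in> T then det (subm I J) else 0)"
  proof -
    have "mat_delete ?M r r = subm I J"
      using assms by (auto simp: mat_delete_def subm_def nth_append)
    then show ?thesis using assms by (simp add: cofactor_def subm_index nth_append)
  qed
  also have "(\<Sum>y<r. ?M $$ (r,y) * cofactor ?M r y)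
     = (\<Sum>y<r. (if J!y \<in> T then 1 else 0) * cofactor (subm (I@[{}]) (J@[j])) r y)"
  proof (rule sum.cong[OF refl])
    fix y assume y: "y \<in> {..<r}"
    have "mat_delete ?M r y = mat_delete (subm (I@[{}]) (J@[j])) r y"
      using assms y by (auto simp: mat_delete_def subm_def nth_append)
    then show "?M $$ (r,y) * cofactor ?M r y = (if J!y \<in> T then 1 else 0) * cofactor (subm (I@[{}]) (J@[j])) r y"
      using assms y by (simp add: cofactor_def subm_index nth_append)
  qed
  finally show ?thesis by simp
qed



lemma key_lemma:
  fixes n m :: nat and R :: "nat set set" and a :: "nat \<Rightarrow> int"
  assumes primes: "\<And>q. prime q \<Longrightarrow> q dvd m \<Longrightarrow> 2 * q > fact n"
    and Rsub: "\<And>T. T \<in> R \<Longrightarrow> T \<subseteq> {..<n}"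
    and Rdvd: "\<And>T. T \<in> R \<Longrightarrow> int m dvd (\<Sum>i\<in>T. a i)"
  shows "\<exists>c d. coprime d (int m) \<and> (\<forall>T\<in>R. (\<Sum>i\<in>T. c i) = 0)
              \<and> (\<forall>i<n. int m dvd c i - d * a i)"
proof -
  define good where "good r \<longleftrightarrow> (\<exists>I J. length I = r \<and> length J = r \<and> set I \<subseteq> R \<and>
      set J \<subseteq> {..<n} \<and> distinct J \<and> det (subm I J) \<noteq> 0)" for r
  have good0: "good 0" unfolding good_def
    by (rule exI[of _ "[]"], rule exI[of _ "[]"]) (simp add: subm_def)
  have goodle: "r \<le> n" if g: "good r" for r
  proof -
    obtain I J where "length J = r" "set J \<subseteq> {..<n}" "distinct J" using g unfolding good_def by blast
    then show ?thesis by (metis card_lessThan card_mono distinct_card finite_lessThan)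
  qed
  define r where "r = Max {r. good r}"
  have fin: "finite {r. good r}" using goodle by (metis finite_nat_set_iff_bounded_le mem_Collect_eq)
  have "good r" unfolding r_def using Max_in[OF fin] good0 by auto
  have rmax: "r' \<le> r" if "good r'" for r' unfolding r_def using Max_ge[OF fin] that by auto
  obtain I J where IJ: "length I = r" "length J = r" "set I \<subseteq> R" "set J \<subseteq> {..<n}" "distinct J"
    and dnz: "det (subm I J) \<noteq> 0" using \<open>good r\<close> good_def by auto
  define d where "d = det (subm I J)"
  define B where "B = subm I J"
  have Bc: "B \<in> carrier_mat r r" using IJ subm_carrier[of I J] B_def by simp
  have rn: "r \<le> n" using goodle \<open>good r\<close> by simp
  have border0: "det (subm (I@[T]) (J@[j])) = 0" if "T \<in> R" "j < n" "j \<notin> set J" for T j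
  proof (rule ccontr)
    assume "det (subm (I@[T]) (J@[j])) \<noteq> 0"
    then have "good (Suc r)" unfolding good_def using IJ that
      by (intro exI[of _ "I@[T]"] exI[of _ "J@[j]"]) auto
    then show False using rmax by fastforce
  qed
  have cop: "coprime d (int m)"
  proof (rule ccontr)
    assume nc: "\<not> coprime d (int m)"
    have "gcd (nat \<bar>d\<bar>) m \<noteq> 1"
    proof
      assume "gcd (nat \<bar>d\<bar>) m = 1"
      then have "coprime (nat \<bar>d\<bar>) m" by (simp add: coprime_iff_gcd_eq_1)
      then have "coprime (int (nat \<bar>d\<bar>)) (int m)" by (simp add: coprime_int_iff)
      then show False using nc by simp
    qed
    then obtain q where q: "prime q" "q dvd gcd (nat \<bar>d\<bar>) m" using prime_factor_nat by blast
    have dpos: "nat \<bar>d\<bar> > 0" using dnz d_def by simp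
    have "q dvd nat \<bar>d\<bar>" "q dvd m" using q(2) by (meson gcd_dvd1 gcd_dvd2 dvd_trans)+
    then have "q \<le> nat \<bar>d\<bar>" using dpos dvd_imp_le by blast
    then have qd: "int q \<le> \<bar>d\<bar>" by simp
    have q2: "2 * q > fact n" using primes q \<open>q dvd m\<close> by auto
    have ent: "\<And>i j. i < r \<Longrightarrow> j < r \<Longrightarrow> B $$ (i,j) = 0 \<or> B $$ (i,j) = 1"
      using IJ by (simp add: B_def subm_index)
    note bd = det_bound01[OF Bc ent]
    have qge: "q \<ge> 2" using prime_ge_2_nat q by blast
    show False
    proof (cases "r \<le> 2")
      case True
      then show ?thesis using bd qd qge B_def d_def by auto
    next
      case False
      then have "2 * \<bar>d\<bar> \<le> fact r" using bd B_def d_def by auto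
      moreover have "(fact r :: int) \<le> fact n" using rn by (simp add: fact_mono)
      moreover have "(fact n :: int) < 2 * int q" using q2 by (metis of_nat_fact of_nat_less_iff of_nat_mult of_nat_numeral)
      ultimately show ?thesis using qd by linarith
    qed
  qed
  define G where "G j y = cofactor (subm (I@[{}]) (J@[j])) r y" for j y
  define rest where "rest = {..<n} - set J"
  define c where "c i = (if i \<in> set J then (\<Sum>j\<in>rest. a j * G j (THE y. y < r \<and> J!y = i)) else d * a i)" for i
  have reidx: "(\<Sum>i\<in>set J. f i) = (\<Sum>y<r. f (J!y))" for f :: "nat \<Rightarrow> int"
  proof -
    have "set J = (\<lambda>y. J!y) ` {..<r}" using IJ by (auto simp: set_conv_nth)
    moreover have "inj_on (\<lambda>y. J!y) {..<r}" using IJ by (simp add: inj_on_def nth_eq_iff_index_eq)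
    ultimately show ?thesis by (simp add: sum.reindex)
  qed
  have split: "(\<Sum>i\<in>T. f i) = (\<Sum>y<r. (if J!y \<in> T then 1 else 0) * f (J!y))
      + (\<Sum>i\<in>rest. (if i \<in> T then 1 else 0) * f i)" if "T \<subseteq> {..<n}" for T and f :: "nat \<Rightarrow> int"
  proof -
    have "(\<Sum>i\<in>T. f i) = (\<Sum>i<n. (if i \<in> T then 1 else 0) * f i)"
    proof -
      have "(\<Sum>i<n. (if i \<in> T then 1 else 0) * f i) = (\<Sum>i<n. if i \<in> T then f i else 0)"
        by (intro sum.cong) auto
      also have "\<dots> = sum f ({..<n} \<inter> T)" by (simp add: sum.inter_restrict)
      also have "{..<n} \<inter> T = T" using that by blast
      finally show ?thesis by simp
    qed
    also have "\<dots> = (\<Sum>i\<in>set J. (if i \<in> T then 1 else 0) * f i) + (\<Sum>i\<in>rest. (if i \<in> T then 1 else 0) * f i)"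
      unfolding rest_def using IJ by (subst sum.subset_diff[of "set J"]) auto
    finally show ?thesis using reidx by simp
  qed
  have rowsum: "(\<Sum>i\<in>T. c i) = 0" if T: "T \<in> R" for T
  proof -
    have sb: "det (subm (I@[T]) (J@[j])) = (if j \<in> T then d else 0) + (\<Sum>y<r. (if J!y \<in> T then 1 else 0) * G j y)" for j
      using subm_border[OF IJ(1,2), of T j] unfolding d_def G_def by simp
    have "(\<Sum>i\<in>T. c i) = (\<Sum>y<r. (if J!y \<in> T then 1 else 0) * c (J!y))
      + (\<Sum>i\<in>rest. (if i \<in> T then 1 else 0) * c i)" using split Rsub T by blast
    also have "(\<Sum>y<r. (if J!y \<in> T then 1 else 0) * c (J!y))
       = (\<Sum>y<r. (if J!y \<in> T then 1 else 0) * (\<Sum>j\<in>rest. a j * G j y))"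
      proof (intro sum.cong refl)
      fix y assume y: "y \<in> {..<r}"
      have "(THE y'. y' < r \<and> J!y' = J!y) = y"
        using IJ y by (intro the_equality) (auto simp: nth_eq_iff_index_eq)
      then show "(if J!y \<in> T then 1 else 0) * c (J!y) = (if J!y \<in> T then 1 else 0) * (\<Sum>j\<in>rest. a j * G j y)"
        using IJ y by (simp add: c_def)
    qed
    also have "\<dots> = (\<Sum>j\<in>rest. a j * (\<Sum>y<r. (if J!y \<in> T then 1 else 0) * G j y))"
      by (simp add: sum_distrib_left sum_distrib_right sum.swap[of _ rest] mult_ac)
    also have "(\<Sum>i\<in>rest. (if i \<in> T then 1 else 0) * c i) = (\<Sum>j\<in>rest. a j * (if j \<in> T then d else 0))"
      by (intro sum.cong) (auto simp: c_def rest_def)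
    finally have "(\<Sum>i\<in>T. c i) = (\<Sum>j\<in>rest. a j * det (subm (I@[T]) (J@[j])))"
      by (simp add: sb distrib_left sum.distrib)
    also have "\<dots> = 0" using border0[OF T] by (intro sum.neutral) (auto simp: rest_def)
    finally show ?thesis .
  qed
  define e where "e i = c i - d * a i" for i
  have erest: "e i = 0" if "i \<notin> set J" for i using that by (simp add: e_def c_def)
  define ev where "ev = vec r (\<lambda>y. e (J!y))"
  have Bev: "int m dvd (B *\<^sub>v ev) $ z" if z: "z < r" for z
  proof -
    have T: "I!z \<in> R" using IJ z by auto
    have "(B *\<^sub>v ev) $ z = (\<Sum>y<r. (if J!y \<in> I!z then 1 else 0) * e (J!y))"
      using Bc z IJ by (simp add: B_def ev_def scalar_prod_def subm_index atLeast0LessThan)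
    also have "\<dots> = (\<Sum>i\<in>I!z. e i)"
      using split[of "I!z" e] Rsub[OF T] erest by (simp add: rest_def)
    also have "\<dots> = (\<Sum>i\<in>I!z. c i) - d * (\<Sum>i\<in>I!z. a i)"
      by (simp add: e_def sum_subtractf sum_distrib_left)
    finally show ?thesis using rowsum[OF T] Rdvd[OF T] by simp
  qed
  have dE: "int m dvd d * e (J!y)" if y: "y < r" for y
  proof -
    have "adj_mat B *\<^sub>v (B *\<^sub>v ev) = (adj_mat B * B) *\<^sub>v ev"
      using Bc adj_mat(1)[OF Bc] by (simp add: ev_def)
    also have "\<dots> = (d \<cdot>\<^sub>m 1\<^sub>m r) *\<^sub>v ev" using adj_mat(3)[OF Bc] by (simp add: d_def B_def)
    finally have eq: "adj_mat B *\<^sub>v (B *\<^sub>v ev) = (d \<cdot>\<^sub>m 1\<^sub>m r) *\<^sub>v ev" .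
    have "((d \<cdot>\<^sub>m 1\<^sub>m r) *\<^sub>v ev) $ y = d * e (J!y)"
      using y by (simp add: ev_def)
    moreover have "int m dvd (adj_mat B *\<^sub>v (B *\<^sub>v ev)) $ y"
    proof -
      have "(adj_mat B *\<^sub>v (B *\<^sub>v ev)) $ y = (\<Sum>i\<in>{0..<r}. adj_mat B $$ (y,i) * (B *\<^sub>v ev) $ i)"
      proof -
        have dA: "dim_row (adj_mat B) = r" "dim_col (adj_mat B) = r" using adj_mat(1)[OF Bc] by auto
        have dv: "dim_vec (B *\<^sub>v ev) = r" using Bc by simp
        show ?thesis unfolding index_mult_mat_vec[of y "adj_mat B", unfolded dA, OF y] scalar_prod_def dv
          using y dA by (intro sum.cong refl) (simp add: row_def)
      qed
      also have "int m dvd \<dots>" using Bev by (intro dvd_sum dvd_mult) simp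
      finally show ?thesis .
    qed
    ultimately show ?thesis using eq by simp
  qed
  have eJ: "int m dvd e (J!y)" if "y < r" for y
  proof -
    have "coprime (int m) d" using cop by (simp add: coprime_commute)
    then show ?thesis using dE[OF that] using coprime_dvd_mult_right_iff coprime_dvd_mult_left_iff by metis
  qed
  have "int m dvd e i" for i
  proof (cases "i \<in> set J")
    case True
    then obtain y where "y < r" "J!y = i" using IJ by (auto simp: in_set_conv_nth)
    then show ?thesis using eJ by blast
  qed (simp add: erest)
  then have "int m dvd c i - d * a i" for i
    by (simp add: e_def)
  then show ?thesis using cop rowsum by blast
qed



lemma foldl_ZH:
  "x0 mod M = x0 \<Longrightarrow> foldl (ZH_add M) (x0, y0) zs
     = ((x0 + sum_list (map fst zs)) mod M, y0 + sum_list (map snd zs))"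
proof (induction zs arbitrary: x0 y0)
  case Nil then show ?case by simp
next
  case (Cons z zs)
  have "foldl (ZH_add M) (x0, y0) (z # zs) = foldl (ZH_add M) ((x0 + fst z) mod M, y0 + snd z) zs"
    by (simp add: ZH_add_def)
  also have "\<dots> = (((x0 + fst z) mod M + sum_list (map fst zs)) mod M, (y0 + snd z) + sum_list (map snd zs))"
    by (rule Cons.IH) simp
  also have "\<dots> = ((x0 + sum_list (map fst (z # zs))) mod M, y0 + sum_list (map snd (z # zs)))"
    by (simp add: mod_add_left_eq add.assoc)
  finally show ?case .
qed

lemma psum_formula:
  assumes "i \<le> length zs"
  shows "ZH_psum M zs i = ((\<Sum>l<i. fst (zs!l)) mod M, (\<Sum>l<i. snd (zs!l)))"
proof -
  have "ZH_psum M zs i = ((0 + sum_list (map fst (take i zs))) mod M, 0 + sum_list (map snd (take i zs)))"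
    unfolding ZH_psum_def ZH_zero_def by (rule foldl_ZH) simp
  moreover have "sum_list (map fst (take i zs)) = (\<Sum>l<i. fst (zs!l))"
    using assms by (simp add: sum_list_sum_nth atLeast0LessThan min_def)
  moreover have "sum_list (map snd (take i zs)) = (\<Sum>l<i. snd (zs!l))"
    using assms by (simp add: sum_list_sum_nth atLeast0LessThan min_def)
  ultimately show ?thesis by simp
qed

lemma psum_full:
  "ZH_psum M zs (length zs) = (sum_list (map fst zs) mod M, sum_list (map snd zs))"
  unfolding ZH_psum_def ZH_zero_def using foldl_ZH[of 0 M 0 zs] by simp

lemma psum_eq_iff:
  assumes "i \<le> j" "j \<le> length zs" "M > 0"
  shows "ZH_psum M zs i = ZH_psum M zs j \<longleftrightarrow>
     ((\<Sum>l\<in>{i..<j}. fst (zs!l)) mod M = 0 \<and> (\<Sum>l\<in>{i..<j}. snd (zs!l)) = 0)"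
proof -
  have s1: "(\<Sum>l<j. f l) = (\<Sum>l<i. f l) + (\<Sum>l\<in>{i..<j}. f l)" for f :: "nat \<Rightarrow> nat"
    using assms by (simp add: atLeast0LessThan[symmetric] sum.atLeastLessThan_concat)
  have s2: "(\<Sum>l<j. f l) = (\<Sum>l<i. f l) + (\<Sum>l\<in>{i..<j}. f l)" for f :: "nat \<Rightarrow> 'a::ab_group_add"
    using assms by (simp add: atLeast0LessThan[symmetric] sum.atLeastLessThan_concat)
  have m: "(A mod M = (A + D) mod M) \<longleftrightarrow> D mod M = 0" for A D :: nat
  proof -
    have "((A+D) mod M = A mod M) \<longleftrightarrow> M dvd (A + D - A)" by (rule mod_eq_dvd_iff_nat) simp
    then show ?thesis by (auto simp: dvd_eq_mod_eq_0)
  qed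
  show ?thesis using assms
    by (simp add: psum_formula s1 s2 m)
qed



lemma small_dvd_zero:
  fixes x :: int assumes "\<bar>x\<bar> < int p" "int p dvd x" shows "x = 0"
proof (rule ccontr)
  assume "x \<noteq> 0"
  then have "\<bar>int p\<bar> \<le> \<bar>x\<bar>" using dvd_imp_le_int assms(2) by blast
  then show False using assms(1) by simp
qed

theorem corollary4p13:
  fixes k :: nat
  assumes "k > 0"
    and "infinite {p::nat. prime p \<and> all_seq p k TYPE('h::{ab_group_add, finite})}"
  shows "\<forall>m::nat. m > 0 \<and> (\<forall>q::nat. prime q \<and> q dvd m \<longrightarrow> 2 * q > fact k)
           \<longrightarrow> all_seq m k TYPE('h)"
proof (intro allI impI)
  fix m :: nat
  assume mprem: "m > 0 \<and> (\<forall>q::nat. prime q \<and> q dvd m \<longrightarrow> 2 * q > fact k)"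
  then have m0: "m > 0" and mq: "\<And>q. prime q \<Longrightarrow> q dvd m \<Longrightarrow> 2 * q > fact k" by auto
  show "all_seq m k TYPE('h)"
    unfolding all_seq_def
  proof (intro allI impI)
    fix S :: "(nat \<times> 'h) set"
    assume Sprem: "S \<subseteq> ZH_carrier m - {ZH_zero} \<and> card S = k \<and> ZH_nonzero_sum m S"
    then have Ssub: "S \<subseteq> ZH_carrier m - {ZH_zero}" and cardS: "card S = k"
      and nzS: "ZH_nonzero_sum m S" by auto
    have finS: "finite S" using cardS assms(1) card_ge_0_finite by blast
    obtain s where s: "distinct s" "set s = S" using finite_distinct_list[OF finS] by blast
    have lens: "length s = k" using s cardS distinct_card by fastforce
    have s_in: "s!i \<in> S" if "i < k" for i using s lens that by auto
    have s_lt: "fst (s!i) < m" if "i < k" for i using Ssub s_in[OF that] by (auto simp: ZH_carrier_def)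
    have s_nz: "s!i \<noteq> ZH_zero" if "i < k" for i using Ssub s_in[OF that] by auto
    define a where "a i = int (fst (s!i))" for i
    define h where "h i = snd (s!i)" for i
    define R where "R = {T. T \<subseteq> {..<k} \<and> int m dvd (\<Sum>i\<in>T. a i)}"
    obtain c d where cop: "coprime d (int m)" and rows: "\<forall>T\<in>R. (\<Sum>i\<in>T. c i) = 0"
      and cong: "\<forall>i<k. int m dvd c i - d * a i"
    proof -
      have R1: "\<And>T. T \<in> R \<Longrightarrow> T \<subseteq> {..<k}" and R2: "\<And>T. T \<in> R \<Longrightarrow> int m dvd (\<Sum>i\<in>T. a i)"
        unfolding R_def by auto
      from key_lemma[of m k R a, OF mq R1 R2] show ?thesis using that by blast
    qed
    define N where "N = nat (\<Sum>i<k. \<bar>c i\<bar>)"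
    obtain p where pP: "p \<in> {p::nat. prime p \<and> all_seq p k TYPE('h)}" and pN: "p > N"
      using assms(2) unfolding infinite_nat_iff_unbounded by blast
    have pprime: "prime p" and allp: "all_seq p k TYPE('h)" using pP by auto
    have p0: "p > 0" using pprime prime_gt_0_nat by blast
    have cbound: "(\<Sum>i\<in>T. \<bar>c i\<bar>) < int p" if "T \<subseteq> {..<k}" for T
    proof -
      have "(\<Sum>i\<in>T. \<bar>c i\<bar>) \<le> (\<Sum>i<k. \<bar>c i\<bar>)" using that by (intro sum_mono2) auto
      then show ?thesis using pN N_def by linarith
    qed
    define b where "b i = nat (c i mod int p)" for i
    have bint: "int (b i) = c i mod int p" for i using p0 by (simp add: b_def)
    have blt: "b i < p" for i
    proof -
      have "int (b i) < int p" using bint[of i] p0 by simp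
      then show ?thesis by simp
    qed
    have Zeq: "(p dvd (\<Sum>i\<in>T. b i)) \<longleftrightarrow> (m dvd (\<Sum>i\<in>T. fst (s!i)))" if T: "T \<subseteq> {..<k}" for T
    proof -
      have "p dvd (\<Sum>i\<in>T. b i) \<longleftrightarrow> int p dvd (\<Sum>i\<in>T. int (b i))"
        by (simp flip: of_nat_sum)
      also have "\<dots> \<longleftrightarrow> int p dvd (\<Sum>i\<in>T. c i)"
        unfolding bint by (simp add: dvd_eq_mod_eq_0 mod_sum_eq)
      also have "\<dots> \<longleftrightarrow> (\<Sum>i\<in>T. c i) = 0"
      proof
        assume "int p dvd (\<Sum>i\<in>T. c i)"
        moreover have "\<bar>\<Sum>i\<in>T. c i\<bar> < int p" using cbound[OF T] sum_abs[of c T] by linarith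
        ultimately show "(\<Sum>i\<in>T. c i) = 0" using small_dvd_zero by blast
      qed simp
      also have "\<dots> \<longleftrightarrow> int m dvd (\<Sum>i\<in>T. a i)"
      proof
        assume "int m dvd (\<Sum>i\<in>T. a i)"
        then have "T \<in> R" using T R_def by auto
        then show "(\<Sum>i\<in>T. c i) = 0" using rows by auto
      next
        assume z: "(\<Sum>i\<in>T. c i) = 0"
        have "int m dvd (\<Sum>i\<in>T. c i - d * a i)" using cong T by (intro dvd_sum) auto
        then have "int m dvd d * (\<Sum>i\<in>T. a i)" using z by (simp add: sum_subtractf sum_distrib_left)
        moreover have "coprime (int m) d" using cop by (simp add: coprime_commute)
        ultimately show "int m dvd (\<Sum>i\<in>T. a i)" using coprime_dvd_mult_right_iff coprime_dvd_mult_left_iff by metis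
      qed
      also have "\<dots> \<longleftrightarrow> m dvd (\<Sum>i\<in>T. fst (s!i))"
        unfolding a_def by (simp flip: of_nat_sum)
      finally show ?thesis .
    qed
    define \<phi> where "\<phi> i = (b i, h i)" for i
    have inj\<phi>: "inj_on \<phi> {..<k}"
    proof (rule inj_onI)
      fix i j assume i: "i \<in> {..<k}" and j: "j \<in> {..<k}" and eq: "\<phi> i = \<phi> j"
      then have bij: "b i = b j" and hij: "h i = h j" by (auto simp: \<phi>_def)
      have "c i mod int p = c j mod int p" using bij bint by metis
      then have "int p dvd c i - c j" by (simp add: mod_eq_dvd_iff)
      moreover have "\<bar>c i - c j\<bar> < int p"
      proof (cases "i = j")
        case False
        have "(\<Sum>l\<in>{i,j}. \<bar>c l\<bar>) < int p" using cbound[of "{i,j}"] i j by auto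
        then show ?thesis using False by auto
      qed (use p0 in auto)
      ultimately have cij: "c i = c j" using small_dvd_zero by fastforce
      have "int m dvd c i - d * a i" "int m dvd c j - d * a j" using cong i j by auto
      then have "int m dvd (c i - d * a i) - (c j - d * a j)" by (rule dvd_diff)
      moreover have "(c i - d * a i) - (c j - d * a j) = - (d * (a i - a j))" using cij by (simp add: algebra_simps)
      ultimately have "int m dvd d * (a i - a j)" by simp
      moreover have "coprime (int m) d" using cop by (simp add: coprime_commute)
      ultimately have "int m dvd a i - a j" using coprime_dvd_mult_right_iff coprime_dvd_mult_left_iff by metis
      moreover have "\<bar>a i - a j\<bar> < int m"
      proof -
        have "fst (s!i) < m" "fst (s!j) < m" using s_lt i j by auto
        then show ?thesis unfolding a_def by linarith
      qed
      ultimately have "a i = a j" using small_dvd_zero by fastforce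
      then have "s!i = s!j" using hij by (simp add: a_def h_def prod_eq_iff)
      then show "i = j" using s lens i j by (simp add: nth_eq_iff_index_eq)
    qed
    define S' where "S' = \<phi> ` {..<k}"
    have cardS': "card S' = k" using inj\<phi> by (simp add: S'_def card_image)
    have S'sub: "S' \<subseteq> ZH_carrier p - {ZH_zero}"
    proof
      fix x assume "x \<in> S'"
      then obtain i where i: "i < k" "x = \<phi> i" by (auto simp: S'_def)
      have "fst x < p" using i blt by (simp add: \<phi>_def)
      moreover have "x \<noteq> ZH_zero"
      proof
        assume x0: "x = ZH_zero"
        then have "b i = 0" "h i = 0" using i by (auto simp: \<phi>_def ZH_zero_def)
        then have "p dvd (\<Sum>l\<in>{i}. b l)" by simp
        then have "m dvd fst (s!i)" using Zeq[of "{i}"] i by simp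
        then have "fst (s!i) = 0"
        proof (rule contrapos_pp)
          assume "fst (s!i) \<noteq> 0"
          then have "\<not> m \<le> fst (s!i) \<and> fst (s!i) > 0" using s_lt[OF i(1)] by simp
          then show "\<not> m dvd fst (s!i)" using dvd_imp_le by blast
        qed
        then have "s!i = ZH_zero" using \<open>h i = 0\<close> by (simp add: h_def ZH_zero_def prod_eq_iff)
        then show False using s_nz i by blast
      qed
      ultimately show "x \<in> ZH_carrier p - {ZH_zero}" by (simp add: ZH_carrier_def)
    qed
    have Simg: "S = (\<lambda>i. s!i) ` {..<k}" using s lens by (auto simp: set_conv_nth)
    have injs: "inj_on (\<lambda>i. s!i) {..<k}" using s lens by (simp add: inj_on_def nth_eq_iff_index_eq)
    have sumS: "ZH_setsum m S = ((\<Sum>i<k. fst (s!i)) mod m, (\<Sum>i<k. h i))"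
      unfolding ZH_setsum_def Simg using injs by (simp add: sum.reindex h_def)
    have sumS': "ZH_setsum p S' = ((\<Sum>i<k. b i) mod p, (\<Sum>i<k. h i))"
    proof -
      have "(\<Sum>x\<in>S'. fst x) = (\<Sum>i<k. b i)" "(\<Sum>x\<in>S'. snd x) = (\<Sum>i<k. h i)"
        unfolding S'_def by (simp_all add: sum.reindex[OF inj\<phi>], simp_all add: \<phi>_def)
      then show ?thesis unfolding ZH_setsum_def by simp
    qed
    have nzS': "ZH_nonzero_sum p S'"
    proof -
      have "ZH_setsum p S' \<noteq> ZH_zero"
      proof
        assume "ZH_setsum p S' = ZH_zero"
        then have "p dvd (\<Sum>i<k. b i)" "(\<Sum>i<k. h i) = 0" using sumS' by (auto simp: ZH_zero_def)
        then have "m dvd (\<Sum>i<k. fst (s!i))" using Zeq[of "{..<k}"] by simp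
        then have "ZH_setsum m S = ZH_zero" using sumS \<open>(\<Sum>i<k. h i) = 0\<close> by (simp add: ZH_zero_def)
        then show False using nzS by (simp add: ZH_nonzero_sum_def)
      qed
      then show ?thesis by (simp add: ZH_nonzero_sum_def)
    qed
    obtain xs' where ord': "ordering_of xs' S'" and sq': "ZH_sequencing p xs' \<or> ZH_rot_sequencing p xs'"
      using allp cardS' S'sub nzS' unfolding all_seq_def ZH_sequenceable_def by blast
    have dxs': "distinct xs'" and setxs': "set xs' = S'" using ord' by (auto simp: ordering_of_def)
    have lenxs': "length xs' = k" using dxs' setxs' cardS' distinct_card by fastforce
    have full': "ZH_psum p xs' (length xs') = ZH_setsum p S'"
      unfolding psum_full ZH_setsum_def using dxs' setxs' by (simp add: sum_list_distinct_conv_sum_set)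
    have seq': "inj_on (ZH_psum p xs') {0..k}"
    proof -
      have "\<not> ZH_rot_sequencing p xs'"
        using full' nzS' by (simp add: ZH_rot_sequencing_def ZH_nonzero_sum_def)
      then show ?thesis using sq' lenxs' by (simp add: ZH_sequencing_def)
    qed
    define \<psi> where "\<psi> = the_inv_into {..<k} \<phi>"
    define "is" where "is = map \<psi> xs'"
    have leni: "length is = k" using lenxs' by (simp add: is_def)
    have \<psi>1: "\<psi> x < k \<and> \<phi> (\<psi> x) = x" if "x \<in> S'" for x
    proof -
      from that obtain i where i: "i < k" "x = \<phi> i" by (auto simp: S'_def)
      have "\<psi> x = i" unfolding \<psi>_def using the_inv_into_f_f[OF inj\<phi>, of i] i by simp
      then show ?thesis using i by simp
    qed
    have xs'_in: "xs'!l \<in> S'" if "l < k" for l using that lenxs' setxs' nth_mem by blast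
    have is_lt: "is!l < k" if "l < k" for l using that \<psi>1[OF xs'_in[OF that]] lenxs' by (simp add: is_def)
    have is_phi: "\<phi> (is!l) = xs'!l" if "l < k" for l using that \<psi>1[OF xs'_in[OF that]] lenxs' by (simp add: is_def)
    have dis: "distinct is"
    proof -
      have "inj_on \<psi> S'" unfolding \<psi>_def S'_def using inj\<phi> by (rule inj_on_the_inv_into)
      then show ?thesis using dxs' setxs' by (simp add: is_def distinct_map)
    qed
    have setis: "set is = {..<k}"
    proof -
      have "set is \<subseteq> {..<k}" using is_lt leni by (auto simp: in_set_conv_nth)
      moreover have "card (set is) = card {..<k}" using dis leni by (simp add: distinct_card)
      ultimately show ?thesis by (simp add: card_subset_eq)
    qed
    define xs where "xs = map (\<lambda>i. s!i) is"
    have lenxs: "length xs = k" using leni by (simp add: xs_def)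
    have xs_nth: "xs!l = s!(is!l)" if "l < k" for l using that leni by (simp add: xs_def)
    have ordxs: "ordering_of xs S"
      unfolding ordering_of_def xs_def using dis setis injs Simg by (simp add: distinct_map)
    have transfer: "ZH_psum m xs i = ZH_psum m xs j \<longleftrightarrow> ZH_psum p xs' i = ZH_psum p xs' j"
      if ij: "i \<le> j" "j \<le> k" for i j
    proof -
      define T where "T = (\<lambda>l. is!l) ` {i..<j}"
      have Tsub: "T \<subseteq> {..<k}" using is_lt ij by (auto simp: T_def)
      have injT: "inj_on (\<lambda>l. is!l) {i..<j}" using dis leni ij by (auto simp: inj_on_def nth_eq_iff_index_eq)
      have e1: "(\<Sum>l\<in>{i..<j}. fst (xs!l)) = (\<Sum>t\<in>T. fst (s!t))"
        unfolding T_def using injT ij by (simp add: sum.reindex[OF injT] xs_nth)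
      have e2: "(\<Sum>l\<in>{i..<j}. snd (xs!l)) = (\<Sum>t\<in>T. h t)"
        unfolding T_def using injT ij by (simp add: sum.reindex[OF injT] xs_nth h_def)
      have e3: "(\<Sum>l\<in>{i..<j}. fst (xs'!l)) = (\<Sum>t\<in>T. b t)"
        unfolding T_def using injT ij by (simp add: sum.reindex[OF injT] is_phi[symmetric] \<phi>_def)
      have e4: "(\<Sum>l\<in>{i..<j}. snd (xs'!l)) = (\<Sum>t\<in>T. h t)"
        unfolding T_def using injT ij by (simp add: sum.reindex[OF injT] is_phi[symmetric] \<phi>_def)
      show ?thesis
        using psum_eq_iff[of i j xs m] psum_eq_iff[of i j xs' p] ij lenxs lenxs' m0 p0
          e1 e2 e3 e4 Zeq[OF Tsub] by (simp add: dvd_eq_mod_eq_0)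
    qed
    have "inj_on (ZH_psum m xs) {0..k}"
    proof (rule inj_onI)
      fix i j assume i: "i \<in> {0..k}" and j: "j \<in> {0..k}" and eq: "ZH_psum m xs i = ZH_psum m xs j"
      show "i = j"
      proof (cases "i \<le> j")
        case True
        moreover have "j \<le> k" using j by simp
        ultimately have "ZH_psum p xs' i = ZH_psum p xs' j" using transfer eq by blast
        then show ?thesis using inj_onD[OF seq' _ i j] by blast
      next
        case False
        have "j \<le> i" "i \<le> k" using False i by auto
        then have "ZH_psum p xs' j = ZH_psum p xs' i" using transfer[of j i] eq by simp
        then show ?thesis using inj_onD[OF seq' _ j i] by simp
      qed
    qed
    then have "ZH_sequencing m xs" using lenxs by (simp add: ZH_sequencing_def)
    then show "ZH_sequenceable m S" using ordxs unfolding ZH_sequenceable_def by blast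
  qed
qed


end
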